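(* Let $\gamma\in C^{2}(\mathbb{R})$ be either an odd or an even function which is convex on $(0,\infty)$ and satisfies: (i) $\gamma(0)=\gamma'(0)=0$; (ii) $\frac{\gamma''(t)}{\gamma'(t)}$ is decreasing on $(0,\infty)$; (iii) there is a constant $C_1>0$ with $\frac{t\gamma''(t)}{\gamma'(t)}\geq C_1$ for all $t\in(0,\infty)$; (iv) $\gamma''$ is monotone on $(0,\infty)$. Then $\gamma$ satisfies the doubling condition (D): there exists $\lambda\in(1,\infty)$ such that $\gamma'(\lambda t)\geq 2\gamma'(t)$ for all $t\in(0,\infty)$; and $\gamma$ satisfies the infinitesimally doubling condition (ID): setting $h(t):=t\gamma'(t)-\gamma(t)$, there exists $\varepsilon_0\in(0,\infty)$ such that $h'(t)\geq \varepsilon_0\frac{h(t)}{t}$ for all $t\in(0,\infty)$. *)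

theory Defs
  imports "HOL-Analysis.Analysis"
begin

end

theory Submission
  imports Defs
begin

theorem lemma3p1:
  fixes \<gamma> \<gamma>' \<gamma>'' :: "real \<Rightarrow> real"
  assumes d1: "\<And>t. (\<gamma> has_real_derivative \<gamma>' t) (at t)"
    and d2: "\<And>t. (\<gamma>' has_real_derivative \<gamma>'' t) (at t)"
    and c2: "continuous_on UNIV \<gamma>''"
    and parity: "(\<forall>x. \<gamma> (- x) = - \<gamma> x) \<or> (\<forall>x. \<gamma> (- x) = \<gamma> x)"
    and cvx: "convex_on {0<..} \<gamma>"
    and i: "\<gamma> 0 = 0" "\<gamma>' 0 = 0"
    and ii: "antimono_on {0<..} (\<lambda>t. \<gamma>'' t / \<gamma>' t)"
    and iii: "\<exists>C1>0. \<forall>t>0. t * \<gamma>'' t / \<gamma>' t \<ge> C1"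
    and iv: "mono_on {0<..} \<gamma>'' \<or> antimono_on {0<..} \<gamma>''"
  shows "(\<exists>lam>1. \<forall>t>0. \<gamma>' (lam * t) \<ge> 2 * \<gamma>' t)
       \<and> (let h = (\<lambda>t. t * \<gamma>' t - \<gamma> t) in
            \<exists>\<epsilon>0>0. \<forall>t>0. deriv h t \<ge> \<epsilon>0 * h t / t)"
proof -
  obtain C1 where C1: "C1 > 0" "\<And>t. t > 0 \<Longrightarrow> t * \<gamma>'' t / \<gamma>' t \<ge> C1"
    using iii by blast
  have nz: "\<gamma>' t \<noteq> 0" if "t > 0" for t
    using C1(2)[OF that] C1(1) by auto
  have mono: "\<gamma>' s \<le> \<gamma>' t" if "0 < s" "s < t" for s t
  proof -
    have a: "\<gamma> t - \<gamma> s \<ge> \<gamma>' s * (t - s)"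
      by (rule convex_on_imp_above_tangent[OF cvx]) 
         (use that d1 in \<open>auto intro: has_field_derivative_at_within simp: interior_open\<close>)
    have b: "\<gamma> s - \<gamma> t \<ge> \<gamma>' t * (s - t)"
      by (rule convex_on_imp_above_tangent[OF cvx]) 
         (use that d1 in \<open>auto intro: has_field_derivative_at_within simp: interior_open\<close>)
    from a b have "(\<gamma>' s - \<gamma>' t) * (t - s) \<le> 0" by (simp add: algebra_simps)
    then show ?thesis using that by (simp add: mult_le_0_iff)
  qed
  have pos: "\<gamma>' t > 0" if "t > 0" for t
  proof (rule ccontr)
    assume "\<not> ?thesis"
    with nz[OF that] have neg: "\<gamma>' t < 0" by simp
    have "isCont \<gamma>' 0" using d2 by (rule DERIV_isCont)
    then obtain d where d: "d > 0" "\<And>y. dist y 0 < d \<Longrightarrow> dist (\<gamma>' y) (\<gamma>' 0) < - \<gamma>' t / 2"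
      using neg by (metis continuous_at_eps_delta half_gt_zero_iff neg_0_less_iff_less)
    define s where "s = min (d/2) (t/2)"
    have s: "0 < s" "s < t" "dist s 0 < d" using d that by (auto simp: s_def dist_real_def)
    have "\<gamma>' s \<le> \<gamma>' t" using mono s by auto
    moreover have "dist (\<gamma>' s) 0 < - \<gamma>' t / 2" using d(2)[OF s(3)] i by simp
    ultimately show False using neg by (simp add: dist_real_def)
  qed
  have key: "t * \<gamma>'' t \<ge> C1 * \<gamma>' t" if "t > 0" for t
    using C1(2)[OF that] pos[OF that] by (simp add: pos_le_divide_eq)
  have gpos: "\<gamma> t \<ge> 0" if "t > 0" for t
  proof -
    obtain z where "0 < z" "z < t" "\<gamma> t - \<gamma> 0 = (t - 0) * \<gamma>' z"
      using MVT2[of 0 t \<gamma> \<gamma>'] \<open>t > 0\<close> d1 by auto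
    then show ?thesis using pos[of z] that i by simp
  qed
  define lam where "lam = exp (ln 2 / C1)"
  have D: "\<exists>lam>1. \<forall>t>0. \<gamma>' (lam * t) \<ge> 2 * \<gamma>' t"
  proof (intro exI[of _ lam] conjI allI impI)
    show "lam > 1" using C1(1) by (simp add: lam_def)
    fix t :: real assume t: "t > 0"
    define f where "f x = ln (\<gamma>' x) - C1 * ln x" for x
    have "f t \<le> f (lam * t)"
    proof (rule DERIV_nonneg_imp_nondecreasing[of t "lam * t" f])
      show "t \<le> lam * t" using \<open>lam > 1\<close> t by simp
      fix x assume x: "t \<le> x" "x \<le> lam * t"
      then have x0: "x > 0" using t by linarith
      have "(f has_real_derivative (\<gamma>'' x / \<gamma>' x - C1 * (1 / x))) (at x)"
        unfolding f_def[abs_def]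
        by (rule derivative_eq_intros refl d2 | use x0 pos[OF x0] in simp)+
      moreover have "\<gamma>'' x / \<gamma>' x - C1 * (1 / x) \<ge> 0"
        using key[OF x0] pos[OF x0] x0 by (simp add: field_simps)
      ultimately show "\<exists>y. (f has_real_derivative y) (at x) \<and> 0 \<le> y" by blast
    qed
    moreover have "ln (lam * t) = ln lam + ln t" using t \<open>lam > 1\<close> by (simp add: ln_mult)
    moreover have "C1 * ln lam = ln 2" using C1(1) by (simp add: lam_def)
    ultimately have "ln (2 * \<gamma>' t) \<le> ln (\<gamma>' (lam * t))"
      using pos[OF t] by (simp add: f_def ln_mult algebra_simps)
    then show "\<gamma>' (lam * t) \<ge> 2 * \<gamma>' t"
      using pos[OF t] pos[of "lam * t"] t \<open>lam > 1\<close> by simp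
  qed
  have ID: "\<exists>\<epsilon>0>0. \<forall>t>0. deriv (\<lambda>t. t * \<gamma>' t - \<gamma> t) t \<ge> \<epsilon>0 * (t * \<gamma>' t - \<gamma> t) / t"
  proof (intro exI[of _ C1] conjI allI impI)
    show "C1 > 0" by (rule C1(1))
    fix t :: real assume t: "t > 0"
    have "((\<lambda>t. t * \<gamma>' t - \<gamma> t) has_real_derivative (1 * \<gamma>' t + \<gamma>'' t * t - \<gamma>' t)) (at t)"
      by (intro DERIV_diff DERIV_mult DERIV_ident d1 d2)
    then have "deriv (\<lambda>t. t * \<gamma>' t - \<gamma> t) t = t * \<gamma>'' t"
      by (auto dest: DERIV_imp_deriv)
    moreover have "C1 * (t * \<gamma>' t - \<gamma> t) / t \<le> C1 * \<gamma>' t"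
      using t gpos[OF t] C1(1) by (simp add: divide_le_eq algebra_simps)
    ultimately show "deriv (\<lambda>t. t * \<gamma>' t - \<gamma> t) t \<ge> C1 * (t * \<gamma>' t - \<gamma> t) / t"
      using key[OF t] by simp
  qed
  show ?thesis using D ID by (simp add: Let_def)
qed

end
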